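(* For a two-player game with two strategies $A,B$ per player and real payoff matrices $G_1=\begin{bmatrix}g_1^{AA}&g_1^{AB}\\ g_1^{BA}&g_1^{BB}\end{bmatrix}$, $G_2=\begin{bmatrix}g_2^{AA}&g_2^{AB}\\ g_2^{BA}&g_2^{BB}\end{bmatrix}$ (rows: player 1's strategy, columns: player 2's), let $\alpha=\operatorname{sgn}(g_1^{AA}-g_1^{BA})$, $\beta=\operatorname{sgn}(g_1^{AB}-g_1^{BB})$, $\gamma=\operatorname{sgn}(g_2^{AA}-g_2^{AB})$, $\delta=\operatorname{sgn}(g_2^{BA}-g_2^{BB})$ (with $\operatorname{sgn}(0)=0$), and define the map \[ \Phi(G_1,G_2)=\left(\begin{bmatrix}\alpha&\beta\\-\alpha&-\beta\end{bmatrix},\ \begin{bmatrix}\gamma&-\gamma\\ \delta&-\delta\end{bmatrix}\right). \] Then: (i) the image of $\Phi$ over all real $2\times2$ games is the set $\mathcal{F}$ of the $3^4=81$ games obtained for $(\alpha,\beta,\gamma,\delta)\in\{-1,0,1\}^4$; (ii) $\Phi$ preserves best responses: for every game, each player $p$ and each strategy of the opponent, player $p$'s (weak) preference between its own two strategies, i.e. the sign of the difference of its two payoffs, is the same in $(G_1,G_2)$ and in $\Phi(G_1,G_2)$; (iii) under the equivalence relation on $\mathcal{F}$ generated by permuting player 1's two strategies, permuting player 2's two strategies, and permuting the players (replacing $(G_1,G_2)$ by $(G'_1,G'_2)$ with $G'_1(a_1,a_2)=G_2(a_2,a_1)$, $G'_2(a_1,a_2)=G_1(a_2,a_1)$), $\mathcal{F}$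 splits into exactly 15 equivalence classes: 11 consisting of games in which neither player's payoff is identically zero, 3 consisting of games in which exactly one player's payoff is identically zero, and 1 consisting of the game in which both payoffs are identically zero.
   Context: Strategy permutations and player permutation map games of the form in $\mathcal{F}$ to games of the same form, so the equivalence relation in (iii) is a relation on $\mathcal{F}$. *)

theory Defs
  imports Main "HOL.Real"
begin

datatype strat = A | B

text \<open>A two-player 2x2 game: payoff functions G1, G2 indexed by
  (strategy of player 1, strategy of player 2).\<close>
type_synonym game = "(strat \<Rightarrow> strat \<Rightarrow> real) \<times> (strat \<Rightarrow> strat \<Rightarrow> real)"

definition sign_game :: "real \<Rightarrow> real \<Rightarrow> real \<Rightarrow> real \<Rightarrow> game" where
  "sign_game \<alpha> \<beta> \<gamma> \<delta> =
     ((\<lambda>a1 a2. case (a1, a2) of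
         (A, A) \<Rightarrow> \<alpha> | (A, B) \<Rightarrow> \<beta> | (B, A) \<Rightarrow> - \<alpha> | (B, B) \<Rightarrow> - \<beta>),
      (\<lambda>a1 a2. case (a1, a2) of
         (A, A) \<Rightarrow> \<gamma> | (A, B) \<Rightarrow> - \<gamma> | (B, A) \<Rightarrow> \<delta> | (B, B) \<Rightarrow> - \<delta>))"

definition Phi :: "game \<Rightarrow> game" where
  "Phi G = (let G1 = fst G; G2 = snd G in
     sign_game (sgn (G1 A A - G1 B A)) (sgn (G1 A B - G1 B B))
               (sgn (G2 A A - G2 A B)) (sgn (G2 B A - G2 B B)))"

definition F :: "game set" where
  "F = {sign_game \<alpha> \<beta> \<gamma> \<delta> | \<alpha> \<beta> \<gamma> \<delta>.
          \<alpha> \<in> {-1, 0, 1} \<and> \<beta> \<in> {-1, 0, 1} \<and> \<gamma> \<in> {-1, 0, 1} \<and> \<delta> \<in> {-1, 0, 1}}"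

definition swap_strat :: "strat \<Rightarrow> strat" where
  "swap_strat s = (case s of A \<Rightarrow> B | B \<Rightarrow> A)"

definition perm1 :: "game \<Rightarrow> game" where
  "perm1 G = ((\<lambda>a1 a2. fst G (swap_strat a1) a2), (\<lambda>a1 a2. snd G (swap_strat a1) a2))"

definition perm2 :: "game \<Rightarrow> game" where
  "perm2 G = ((\<lambda>a1 a2. fst G a1 (swap_strat a2)), (\<lambda>a1 a2. snd G a1 (swap_strat a2)))"

definition perm_players :: "game \<Rightarrow> game" where
  "perm_players G = ((\<lambda>a1 a2. snd G a2 a1), (\<lambda>a1 a2. fst G a2 a1))"

definition step_rel :: "game rel" where
  "step_rel = {(G, H). G \<in> F \<and> (H = perm1 G \<or> H = perm2 G \<or> H = perm_players G)}"

definition equivF :: "game rel" where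
  "equivF = (step_rel \<union> step_rel\<inverse>)\<^sup>* \<inter> (F \<times> F)"

definition zero_payoff :: "strat \<Rightarrow> strat \<Rightarrow> real" where
  "zero_payoff = (\<lambda>_ _. 0)"

end

theory Submission
  imports Defs
begin

datatype s3 = M | Z | P

fun val :: "s3 \<Rightarrow> real" where "val M = -1" | "val Z = 0" | "val P = 1"
fun ng :: "s3 \<Rightarrow> s3" where "ng M = P" | "ng Z = Z" | "ng P = M"

lemma val_ng[simp]: "val (ng x) = - val x" by (cases x) auto
lemma ng_ng[simp]: "ng (ng x) = x" by (cases x) auto
lemma val_inj: "val x = val y \<longleftrightarrow> x = y" by (cases x; cases y) auto
lemma val_zero: "val x = 0 \<longleftrightarrow> x = Z" by (cases x) auto
lemma val_mem: "val x \<in> {-1,0,1}" by (cases x) auto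
lemma mem_val: "(r::real) \<in> {-1,0,1} \<Longrightarrow> \<exists>x. r = val x"
proof -
  assume "r \<in> {-1,0,1}"
  then have "r = val M \<or> r = val Z \<or> r = val P" by auto
  then show ?thesis by blast
qed

type_synonym t4 = "s3 \<times> s3 \<times> s3 \<times> s3"

fun sgt :: "t4 \<Rightarrow> game" where
  "sgt (a,b,c,d) = sign_game (val a) (val b) (val c) (val d)"

fun p1 :: "t4 \<Rightarrow> t4" where "p1 (a,b,c,d) = (ng a, ng b, d, c)"
fun p2 :: "t4 \<Rightarrow> t4" where "p2 (a,b,c,d) = (b, a, ng c, ng d)"
fun pp :: "t4 \<Rightarrow> t4" where "pp (a,b,c,d) = (c, d, a, b)"

fun orb :: "t4 \<Rightarrow> t4 set" where
 "orb (a,b,c,d) = {(a,b,c,d), (ng a, ng b, d, c), (b,a,ng c, ng d), (ng b, ng a, ng d, ng c),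
   (c,d,a,b), (d,c,ng a, ng b), (ng c, ng d, b, a), (ng d, ng c, ng b, ng a)}"

definition allt :: "t4 list" where
  "allt = [(a,b,c,d). a\<leftarrow>[M,Z,P], b\<leftarrow>[M,Z,P], c\<leftarrow>[M,Z,P], d\<leftarrow>[M,Z,P]]"

lemma UNIV_allt: "(UNIV :: t4 set) = set allt"
proof -
  have "x \<in> set allt" for x
    apply (cases x)
    subgoal for a b c d by (cases a; cases b; cases c; cases d) (simp_all add: allt_def)
    done
  then show ?thesis by auto
qed

lemma comp1: "card (orb ` set allt) = 15" by code_simp
lemma comp2: "card {C \<in> orb ` set allt. \<forall>u\<in>C. \<not>(fst u = Z \<and> fst (snd u) = Z) \<and> \<not>(fst (snd (snd u)) = Z \<and> snd (snd (snd u)) = Z)} = 11" by code_simp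
lemma comp3: "card {C \<in> orb ` set allt. \<forall>u\<in>C. (fst u = Z \<and> fst (snd u) = Z) \<noteq> (fst (snd (snd u)) = Z \<and> snd (snd (snd u)) = Z)} = 3" by code_simp
lemma comp4: "{C \<in> orb ` set allt. \<forall>u\<in>C. (fst u = Z \<and> fst (snd u) = Z) \<and> (fst (snd (snd u)) = Z \<and> snd (snd (snd u)) = Z)} = {{(Z,Z,Z,Z)}}" by code_simp

lemma sgt_inj: "inj sgt"
proof (rule injI)
  fix t u assume eq: "sgt t = sgt u"
  obtain a b c d where t: "t = (a,b,c,d)" by (cases t) auto
  obtain a' b' c' d' where u: "u = (a',b',c',d')" by (cases u) auto
  have "fst (sgt t) A A = fst (sgt u) A A" "fst (sgt t) A B = fst (sgt u) A B"
       "snd (sgt t) A A = snd (sgt u) A A" "snd (sgt t) B A = snd (sgt u) B A" using eq by auto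
  then show "t = u" by (simp add: t u sign_game_def val_inj)
qed

lemma F_range: "F = range sgt"
proof
  show "F \<subseteq> range sgt"
  proof
    fix G assume "G \<in> F"
    then obtain \<alpha> \<beta> \<gamma> \<delta> where G: "G = sign_game \<alpha> \<beta> \<gamma> \<delta>" and
      m: "\<alpha> \<in> {-1, 0, 1}" "\<beta> \<in> {-1, 0, 1}" "\<gamma> \<in> {-1, 0, 1}" "\<delta> \<in> {-1, 0, 1}"
      unfolding F_def by blast
    obtain a b c d where "\<alpha> = val a" "\<beta> = val b" "\<gamma> = val c" "\<delta> = val d"
      using mem_val[OF m(1)] mem_val[OF m(2)] mem_val[OF m(3)] mem_val[OF m(4)] by blast
    then have "G = sgt (a,b,c,d)" using G by simp
    then show "G \<in> range sgt" by blast
  qed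
next
  show "range sgt \<subseteq> F"
  proof
    fix G assume "G \<in> range sgt"
    then obtain a b c d where "G = sgt (a,b,c,d)" by (metis surj_pair rangeE)
    then show "G \<in> F" unfolding F_def using val_mem by fastforce
  qed
qed

lemma Phi_sgt: "Phi (sgt t) = sgt t"
proof -
  obtain a b c d where t: "t = (a,b,c,d)" by (cases t) auto
  have s: "sgn (2 * val x) = val x" for x by (cases x) auto
  show ?thesis unfolding t by (simp add: Phi_def sign_game_def s fun_eq_iff split: strat.split)
qed

lemma sgn_mem: "sgn (x::real) \<in> {-1,0,1}" by (auto simp: sgn_if)

lemma range_Phi: "range Phi = F"
proof
  show "range Phi \<subseteq> F"
  proof
    fix H assume "H \<in> range Phi"
    then obtain G where "H = Phi G" by blast
    then show "H \<in> F" unfolding F_def Phi_def Let_def using sgn_mem by blast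
  qed
next
  show "F \<subseteq> range Phi" unfolding F_range using Phi_sgt by (metis image_subsetI rangeI)
qed

lemma best_resp: "sgn (fst G A b - fst G B b) = sgn (fst (Phi G) A b - fst (Phi G) B b)
             \<and> sgn (snd G b A - snd G b B) = sgn (snd (Phi G) b A - snd (Phi G) b B)"
proof -
  have h: "sgn ((sgn x::real) - - sgn x) = sgn x" "sgn ((sgn x::real) + sgn x) = sgn x"
    "sgn (2 * (sgn x::real)) = sgn x" for x by (auto simp: sgn_if)
  show ?thesis by (cases b) (simp_all add: Phi_def Let_def sign_game_def h)
qed

lemma perm1_sgt: "perm1 (sgt t) = sgt (p1 t)"
  by (cases t) (auto simp: perm1_def sign_game_def swap_strat_def fun_eq_iff split: strat.split)
lemma perm2_sgt: "perm2 (sgt t) = sgt (p2 t)"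
  by (cases t) (auto simp: perm2_def sign_game_def swap_strat_def fun_eq_iff split: strat.split)
lemma pp_sgt: "perm_players (sgt t) = sgt (pp t)"
  by (cases t) (auto simp: perm_players_def sign_game_def fun_eq_iff split: strat.split)

lemma p1_p1[simp]: "p1 (p1 t) = t" by (cases t) auto
lemma p2_p2[simp]: "p2 (p2 t) = t" by (cases t) auto
lemma pp_pp[simp]: "pp (pp t) = t" by (cases t) auto

lemma orb_cl: "u \<in> orb t \<Longrightarrow> p1 u \<in> orb t \<and> p2 u \<in> orb t \<and> pp u \<in> orb t"
  by (cases t) auto

lemma orb_self: "t \<in> orb t" by (cases t) auto

abbreviation "S \<equiv> step_rel \<union> step_rel\<inverse>"

lemma sgt_eq: "sgt x = sgt y \<Longrightarrow> x = y" using sgt_inj by (simp add: inj_eq)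

lemma reach1: "(sgt t, H) \<in> S\<^sup>* \<Longrightarrow> \<exists>u\<in>orb t. H = sgt u"
proof (induction rule: rtrancl_induct)
  case base then show ?case using orb_self by blast
next
  case (step H K)
  from step.IH obtain u where u: "u \<in> orb t" "H = sgt u" by blast
  from step.hyps(2) show ?case
  proof
    assume "(H, K) \<in> step_rel"
    then have "K = perm1 H \<or> K = perm2 H \<or> K = perm_players H" unfolding step_rel_def by blast
    then show ?thesis using u orb_cl[OF u(1)] perm1_sgt perm2_sgt pp_sgt by metis
  next
    assume "(H, K) \<in> step_rel\<inverse>"
    then have K: "K \<in> F" "H = perm1 K \<or> H = perm2 K \<or> H = perm_players K" unfolding step_rel_def by auto
    then obtain v where v: "K = sgt v" unfolding F_range by blast
    from K(2) have "u = p1 v \<or> u = p2 v \<or> u = pp v"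
      unfolding v u perm1_sgt perm2_sgt pp_sgt using sgt_eq by metis
    then have "v = p1 u \<or> v = p2 u \<or> v = pp u" by auto
    then show ?thesis using v orb_cl[OF u(1)] by metis
  qed
qed

lemma stp: "(x, sgt u) \<in> S\<^sup>* \<Longrightarrow> (x, sgt (p1 u)) \<in> S\<^sup>* \<and> (x, sgt (p2 u)) \<in> S\<^sup>* \<and> (x, sgt (pp u)) \<in> S\<^sup>*"
proof -
  assume h: "(x, sgt u) \<in> S\<^sup>*"
  have inF: "sgt u \<in> F" unfolding F_range by blast
  have "(sgt u, sgt (p1 u)) \<in> S" "(sgt u, sgt (p2 u)) \<in> S" "(sgt u, sgt (pp u)) \<in> S"
    using inF by (auto simp: step_rel_def perm1_sgt perm2_sgt pp_sgt)
  then show ?thesis using h by (meson rtrancl_into_rtrancl)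
qed

lemma reach2: "u \<in> orb t \<Longrightarrow> (sgt t, sgt u) \<in> S\<^sup>*"
proof -
  assume u: "u \<in> orb t"
  have r0: "(sgt t, sgt t) \<in> S\<^sup>*" by simp
  note r1 = stp[OF r0]
  have r3: "(sgt t, sgt (p1 (p2 t))) \<in> S\<^sup>*" using stp[OF conjunct1[OF conjunct2[OF r1]]] by blast
  have r5: "(sgt t, sgt (pp (p1 t))) \<in> S\<^sup>*" using stp[OF conjunct1[OF r1]] by blast
  have r6: "(sgt t, sgt (p1 (pp t))) \<in> S\<^sup>*" using stp[OF conjunct2[OF conjunct2[OF r1]]] by blast
  have r7: "(sgt t, sgt (pp (p1 (p2 t)))) \<in> S\<^sup>*" using stp[OF r3] by blast
  obtain a b c d where t: "t = (a,b,c,d)" by (cases t) auto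
  show ?thesis using u r0 r1 r3 r5 r6 r7 unfolding t
    by (simp only: p1.simps p2.simps pp.simps orb.simps) blast
qed

lemma equivF_char: "equivF = {(sgt t, sgt u) | t u. u \<in> orb t}"
proof (intro set_eqI iffI)
  fix x assume "x \<in> equivF"
  then obtain G H where x: "x = (G, H)" "(G, H) \<in> equivF" by (cases x) auto
  from x(2) have "G \<in> F" "(G,H) \<in> S\<^sup>*" unfolding equivF_def by auto
  then obtain t where "G = sgt t" unfolding F_range by blast
  then show "x \<in> {(sgt t, sgt u) | t u. u \<in> orb t}" using reach1 \<open>(G,H) \<in> S\<^sup>*\<close> x(1) by blast
next
  fix x assume "x \<in> {(sgt t, sgt u) | t u. u \<in> orb t}"
  then obtain t u where "x = (sgt t, sgt u)" "u \<in> orb t" by blast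
  then show "x \<in> equivF" unfolding equivF_def F_range using reach2 by blast
qed

lemma img: "equivF `` {sgt t} = sgt ` orb t"
proof
  show "equivF `` {sgt t} \<subseteq> sgt ` orb t"
  proof
    fix H assume "H \<in> equivF `` {sgt t}"
    then obtain t' u where "sgt t = sgt t'" "u \<in> orb t'" "H = sgt u" unfolding equivF_char Image_singleton_iff by blast
    then show "H \<in> sgt ` orb t" using sgt_eq by blast
  qed
  show "sgt ` orb t \<subseteq> equivF `` {sgt t}" unfolding equivF_char by blast
qed

lemma quot: "F // equivF = image sgt ` (orb ` set allt)"
  unfolding quotient_def F_range UNIV_allt[symmetric] using img by auto

lemma inj_img: "inj_on (image sgt) X"
  using sgt_inj by (simp add: inj_on_def inj_image_eq_iff)

lemma filt: "{C \<in> image sgt ` Q. Pr C} = image sgt ` {C \<in> Q. Pr (sgt ` C)}" by auto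

lemma z1: "(fst (sgt u) = zero_payoff) = (fst u = Z \<and> fst (snd u) = Z)"
  by (cases u) (auto simp: zero_payoff_def sign_game_def fun_eq_iff val_zero split: strat.split)
lemma z2: "(snd (sgt u) = zero_payoff) = (fst (snd (snd u)) = Z \<and> snd (snd (snd u)) = Z)"
  by (cases u) (auto simp: zero_payoff_def sign_game_def fun_eq_iff val_zero split: strat.split)

lemma equivF_equiv: "equiv F equivF"
proof -
  have sy: "sym (S\<^sup>*)" by (simp add: sym_rtrancl sym_Un_converse)
  show ?thesis unfolding equiv_def refl_on_def sym_def trans_def equivF_def
    using sy by (auto simp: sym_def intro: rtrancl_trans)
qed

theorem mainTheorem6:
  shows "(range Phi = F \<and> card F = 81)
    \<and> (\<forall>G b. sgn (fst G A b - fst G B b) = sgn (fst (Phi G) A b - fst (Phi G) B b)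
             \<and> sgn (snd G b A - snd G b B) = sgn (snd (Phi G) b A - snd (Phi G) b B))
    \<and> equiv F equivF
    \<and> card (F // equivF) = 15
    \<and> card {C \<in> F // equivF. \<forall>G\<in>C. fst G \<noteq> zero_payoff \<and> snd G \<noteq> zero_payoff} = 11
    \<and> card {C \<in> F // equivF. \<forall>G\<in>C. (fst G = zero_payoff) \<noteq> (snd G = zero_payoff)} = 3
    \<and> {C \<in> F // equivF. \<forall>G\<in>C. fst G = zero_payoff \<and> snd G = zero_payoff}
           = {{(zero_payoff, zero_payoff)}}"
proof (intro conjI allI)
  show "range Phi = F" by (rule range_Phi)
  have "card (set allt) = 81" by code_simp
  then show "card F = 81" unfolding F_range UNIV_allt using card_image[OF inj_on_subset[OF sgt_inj]] by simp
  show "equiv F equivF" by (rule equivF_equiv)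
  show "card (F // equivF) = 15" unfolding quot using card_image[OF inj_img] comp1 by simp
  show "card {C \<in> F // equivF. \<forall>G\<in>C. fst G \<noteq> zero_payoff \<and> snd G \<noteq> zero_payoff} = 11"
    unfolding quot filt using card_image[OF inj_img] comp2 by (simp add: z1 z2)
  show "card {C \<in> F // equivF. \<forall>G\<in>C. (fst G = zero_payoff) \<noteq> (snd G = zero_payoff)} = 3"
    unfolding quot filt using card_image[OF inj_img] comp3 by (simp add: z1 z2)
  have zz: "sgt (Z,Z,Z,Z) = (zero_payoff, zero_payoff)"
    by (auto simp: zero_payoff_def sign_game_def fun_eq_iff split: strat.split)
  show "{C \<in> F // equivF. \<forall>G\<in>C. fst G = zero_payoff \<and> snd G = zero_payoff}
           = {{(zero_payoff, zero_payoff)}}"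
    unfolding quot filt using comp4 zz by (simp add: z1 z2)
qed (rule best_resp[THEN conjunct1], rule best_resp[THEN conjunct2])

end
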